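(* Let $X$ be a nonnegative random variable with support $(0,r)$, where $r\in(0,+\infty)$, having finite CIGF $G_X(\alpha,\beta)$ for $(\alpha,\beta)\in D_X$. Assume the moment generating function $M_X(s)=\mathbb{E}(e^{sX})$ satisfies $M_X(s)<+\infty$ for all $s\in(-s_0,s_0)$, for some $s_0>0$. Then: (i) for all $s_1\in(-s_0,0)$, $s_2\in(0,s_0)$ and $(\alpha,\beta)\in D_X$ with $\alpha>0,\beta>0$, $$G_X(\alpha,\beta)\le g(r;\alpha,\beta,\mathbf{s})\,[M_X(s_1)]^\alpha[M_X(s_2)]^\beta;$$ (ii) for all $s_1\in(-s_0,0)$, $s_2\in(0,s_0)$ and $(\alpha,\beta)\in D_X$ with $\alpha<0,\beta<0$, $$G_X(\alpha,\beta)\ge g(r;\alpha,\beta,\mathbf{s})\,[M_X(s_1)]^\alpha[M_X(s_2)]^\beta,$$ where $g(r;\alpha,\beta,\mathbf{s})=\frac{1}{\alpha s_1+\beta s_2}\left[1-e^{-(\alpha s_1+\beta s_2)r}\right]$ if $\alpha s_1+\beta s_2\ne0$, and $g(r;\alpha,\beta,\mathbf{s})=r$ if $\alpha s_1+\beta s_2=0$.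
   Context: For a random variable $X$ with CDF $F$ and survival function $\overline F=1-F$, let $l=\inf\{x:F(x)>0\}$, $r=\sup\{x:\overline F(x)>0\}$. The CIGF of $X$ is $G_X(\alpha,\beta)=\int_l^r [F(x)]^\alpha[\overline F(x)]^\beta\,dx$ on $D_X=\{(\alpha,\beta)\in\mathbb{R}^2: G_X(\alpha,\beta)<\infty\}$. *)

theory Defs
  imports "HOL-Probability.Probability"
begin

definition cdf_rv :: "'a measure \<Rightarrow> ('a \<Rightarrow> real) \<Rightarrow> real \<Rightarrow> real" where
  "cdf_rv M X x = measure M {\<omega> \<in> space M. X \<omega> \<le> x}"

definition surv_rv :: "'a measure \<Rightarrow> ('a \<Rightarrow> real) \<Rightarrow> real \<Rightarrow> real" where
  "surv_rv M X x = 1 - cdf_rv M X x"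

definition left_end :: "'a measure \<Rightarrow> ('a \<Rightarrow> real) \<Rightarrow> real" where
  "left_end M X = Inf {x. cdf_rv M X x > 0}"

definition right_end :: "'a measure \<Rightarrow> ('a \<Rightarrow> real) \<Rightarrow> real" where
  "right_end M X = Sup {x. surv_rv M X x > 0}"

definition CIGF :: "'a measure \<Rightarrow> ('a \<Rightarrow> real) \<Rightarrow> real \<Rightarrow> real \<Rightarrow> real" where
  "CIGF M X a b = (LINT x:{left_end M X<..<right_end M X}|lborel.
      cdf_rv M X x powr a * surv_rv M X x powr b)"

text \<open>D_X: the set of (alpha,beta) for which the (nonnegative) integral is finite.\<close>
definition CIGF_domain :: "'a measure \<Rightarrow> ('a \<Rightarrow> real) \<Rightarrow> (real \<times> real) set" where
  "CIGF_domain M X = {(a, b). set_integrable lborel {left_end M X<..<right_end M X}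
      (\<lambda>x. cdf_rv M X x powr a * surv_rv M X x powr b)}"

definition mgf :: "'a measure \<Rightarrow> ('a \<Rightarrow> real) \<Rightarrow> real \<Rightarrow> real" where
  "mgf M X s = (\<integral>\<omega>. exp (s * X \<omega>) \<partial>M)"

definition g_bound :: "real \<Rightarrow> real \<Rightarrow> real \<Rightarrow> real \<Rightarrow> real \<Rightarrow> real" where
  "g_bound r a b s1 s2 =
     (if a * s1 + b * s2 \<noteq> 0 then (1 - exp (- (a * s1 + b * s2) * r)) / (a * s1 + b * s2)
      else r)"

end

theory Submission
  imports Defs
begin

lemma exp_int_Ioo:
  fixes c r :: real
  assumes "0 < r"
  shows "set_integrable lborel {0<..<r} (\<lambda>x. exp (- c * x))"
    and "(LINT x:{0<..<r}|lborel. exp (- c * x)) =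
         (if c \<noteq> 0 then (1 - exp (- c * r)) / c else r)"
proof -
  have "set_integrable lborel {0..r} (\<lambda>x. exp (- c * x))"
    by (intro borel_integrable_atLeastAtMost' continuous_intros)
  then show "set_integrable lborel {0<..<r} (\<lambda>x. exp (- c * x))"
    by (rule set_integrable_subset) auto
  have eq: "(LINT x:{0<..<r}|lborel. exp (- c * x)) = (LBINT x=ereal 0..ereal r. exp (- c * x))"
    using assms by (subst interval_integral_Ioo) auto
  show "(LINT x:{0<..<r}|lborel. exp (- c * x)) =
         (if c \<noteq> 0 then (1 - exp (- c * r)) / c else r)"
  proof (cases "c = 0")
    case True
    have "(LBINT x=ereal 0..ereal r. exp (- c * x)) = r - 0"
      using assms True
      by (intro interval_integral_FTC_finite[where F="\<lambda>x. x"])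
         (auto intro!: continuous_intros derivative_eq_intros)
    then show ?thesis using eq True by simp
  next
    case False
    have "(LBINT x=ereal 0..ereal r. exp (- c * x)) = (- exp (- c * r) / c) - (- exp (- c * 0) / c)"
      using assms False
      by (intro interval_integral_FTC_finite[where F="\<lambda>x. - exp (- c * x) / c"])
         (auto intro!: continuous_intros derivative_eq_intros simp: has_real_derivative_iff_has_vector_derivative[symmetric])
    then show ?thesis using eq False by (simp add: diff_divide_distrib)
  qed
qed

theorem proposition4:
  fixes M :: "'a measure" and X :: "'a \<Rightarrow> real" and r s0 :: real
  assumes "prob_space M"
    and "X \<in> borel_measurable M"
    and "AE \<omega> in M. X \<omega> \<ge> 0"
    and "left_end M X = 0" and "right_end M X = r"
    and "0 < r"
    and "0 < s0"
    and "\<And>s. s \<in> {-s0<..<s0} \<Longrightarrow> integrable M (\<lambda>\<omega>. exp (s * X \<omega>))"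
  shows "(\<forall>s1 s2 a b. s1 \<in> {-s0<..<0} \<and> s2 \<in> {0<..<s0} \<and> (a, b) \<in> CIGF_domain M X
            \<and> a > 0 \<and> b > 0 \<longrightarrow>
            CIGF M X a b \<le> g_bound r a b s1 s2 * mgf M X s1 powr a * mgf M X s2 powr b)
       \<and> (\<forall>s1 s2 a b. s1 \<in> {-s0<..<0} \<and> s2 \<in> {0<..<s0} \<and> (a, b) \<in> CIGF_domain M X
            \<and> a < 0 \<and> b < 0 \<longrightarrow>
            CIGF M X a b \<ge> g_bound r a b s1 s2 * mgf M X s1 powr a * mgf M X s2 powr b)"
proof -
  interpret prob_space M by fact
  note Xm[measurable] = assms(2)
  define F where "F = cdf_rv M X"
  define S where "S = surv_rv M X"
  define D where "D = distr M borel X"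
  interpret D: real_distribution D unfolding D_def using Xm by simp
  have FD: "F x = cdf D x" for x
  proof -
    have "cdf D x = measure M (X -` {..x} \<inter> space M)"
      unfolding cdf_def D_def by (subst measure_distr) auto
    also have "X -` {..x} \<inter> space M = {\<omega> \<in> space M. X \<omega> \<le> x}" by auto
    finally show ?thesis unfolding F_def cdf_rv_def by simp
  qed
  have Fmono: "x \<le> y \<Longrightarrow> F x \<le> F y" for x y using FD D.cdf_nondecreasing by simp
  have F01: "0 \<le> F x" "F x \<le> 1" for x using FD D.cdf_nonneg D.cdf_bounded_prob by auto
  have SF: "S x = 1 - F x" for x unfolding S_def F_def surv_rv_def by simp
  have Smeas: "S x = measure M {\<omega> \<in> space M. x < X \<omega>}" for x
  proof -
    have "{\<omega> \<in> space M. x < X \<omega>} = space M - {\<omega> \<in> space M. X \<omega> \<le> x}" by auto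
    then show ?thesis unfolding SF F_def cdf_rv_def
      by (simp add: prob_compl)
  qed
  have Fneg: "F y = 0" if "y < 0" for y
  proof -
    have "AE \<omega> in M. \<not> X \<omega> \<le> y" using assms(3) by eventually_elim (use that in auto)
    then have "emeasure M {\<omega> \<in> space M. X \<omega> \<le> y} = 0" by (rule emeasure_eq_0_AE)
    then show ?thesis unfolding F_def cdf_rv_def by (simp add: measure_def)
  qed
  have Fpos: "0 < F x" if "0 < x" for x
  proof -
    let ?A = "{x. F x > 0}"
    have "eventually (\<lambda>x. F x > 1/2) at_top"
      using D.cdf_lim_at_top_prob unfolding FD[abs_def]
      by (rule order_tendstoD) simp
    then obtain z where "F z > 1/2" by (auto simp: eventually_at_top_linorder)
    then have ne: "?A \<noteq> {}" by (metis (mono_tags) empty_iff less_trans mem_Collect_eq zero_less_divide_1_iff zero_less_numeral)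
    have bdd: "bdd_below ?A"
    proof (rule bdd_belowI[of _ "-1"])
      fix y assume "y \<in> ?A"
      then show "-1 \<le> y" using Fneg[of y] by (cases "y < 0") auto
    qed
    have "Inf ?A < x" using assms(4) that unfolding left_end_def F_def by simp
    then obtain y where "y \<in> ?A" "y < x" using cInf_less_iff[OF ne bdd] by auto
    then show ?thesis using Fmono[of y x] by auto
  qed
  have Spos: "0 < S x" if "x < r" for x
  proof -
    let ?T = "{x. S x > 0}"
    have "\<exists>y\<in>?T. x < y"
    proof (cases "bdd_above ?T")
      case True
      have "-1 \<in> ?T" using Fneg[of "-1"] SF by simp
      then have ne: "?T \<noteq> {}" by auto
      have "x < Sup ?T" using assms(5) that unfolding right_end_def S_def by simp
      then show ?thesis using less_cSup_iff[OF ne True] by auto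
    next
      case False
      then show ?thesis unfolding bdd_above_def by (meson not_le)
    qed
    then obtain y where "S y > 0" "x < y" by auto
    then show ?thesis using Fmono[of x y] SF by auto
  qed
  have cherF: "F x \<le> mgf M X s * exp (- s * x)" if "s \<in> {-s0<..<0}" for s x
  proof -
    have int: "integrable M (\<lambda>\<omega>. exp (s * X \<omega>))" using assms(8) that by auto
    have "{\<omega> \<in> space M. X \<omega> \<le> x} = {\<omega> \<in> space M. exp (s * x) \<le> exp (s * X \<omega>)}"
      using that by (auto simp: mult_le_cancel_left_neg)
    then have "F x = measure M {\<omega> \<in> space M. exp (s * x) \<le> exp (s * X \<omega>)}"
      unfolding F_def cdf_rv_def by simp
    also have "\<dots> \<le> (\<integral>\<omega>. exp (s * X \<omega>) \<partial>M) / exp (s * x)"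
      by (rule integral_Markov_inequality_measure[OF int, of "space M"]) auto
    finally show ?thesis unfolding mgf_def by (simp add: exp_minus field_simps)
  qed
  have cherS: "S x \<le> mgf M X s * exp (- s * x)" if "s \<in> {0<..<s0}" for s x
  proof -
    have int: "integrable M (\<lambda>\<omega>. exp (s * X \<omega>))" using assms(8) that assms(7) by auto
    have "S x \<le> measure M {\<omega> \<in> space M. exp (s * x) \<le> exp (s * X \<omega>)}"
      unfolding Smeas using that by (intro finite_measure_mono) auto
    also have "\<dots> \<le> (\<integral>\<omega>. exp (s * X \<omega>) \<partial>M) / exp (s * x)"
      by (rule integral_Markov_inequality_measure[OF int, of "space M"]) auto
    finally show ?thesis unfolding mgf_def by (simp add: exp_minus field_simps)
  qed
  have mgfF: "0 < mgf M X s" if "s \<in> {-s0<..<0}" for s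
  proof -
    have "0 < F (r/2)" using Fpos assms(6) by simp
    also have "\<dots> \<le> mgf M X s * exp (- s * (r/2))" by (rule cherF[OF that])
    finally show ?thesis by (simp add: zero_less_mult_iff)
  qed
  have mgfS: "0 < mgf M X s" if "s \<in> {0<..<s0}" for s
  proof -
    have "0 < S (r/2)" using Spos assms(6) by simp
    also have "\<dots> \<le> mgf M X s * exp (- s * (r/2))" by (rule cherS[OF that])
    finally show ?thesis by (simp add: zero_less_mult_iff)
  qed
  have CIGF_eq: "CIGF M X a b = (LINT x:{0<..<r}|lborel. F x powr a * S x powr b)" for a b
    unfolding CIGF_def F_def S_def using assms(4,5) by simp
  have dom: "set_integrable lborel {0<..<r} (\<lambda>x. F x powr a * S x powr b)"
    if "(a, b) \<in> CIGF_domain M X" for a b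
    using that unfolding CIGF_domain_def F_def S_def using assms(4,5) by simp
  have key: "(LINT x:{0<..<r}|lborel. exp (- (a * s1 + b * s2) * x) * (mgf M X s1 powr a * mgf M X s2 powr b))
      = g_bound r a b s1 s2 * mgf M X s1 powr a * mgf M X s2 powr b" for a b s1 s2
    unfolding set_integral_mult_left exp_int_Ioo(2)[OF assms(6)] g_bound_def by simp
  have bint: "set_integrable lborel {0<..<r} (\<lambda>x. exp (- (a * s1 + b * s2) * x) * (mgf M X s1 powr a * mgf M X s2 powr b))" for a b s1 s2
    by (rule set_integrable_mult_left) (rule exp_int_Ioo(1)[OF assms(6)])
  have pw: "(mgf M X s * exp (- s * x)) powr a = mgf M X s powr a * exp (- (a * s) * x)"
    if "0 < mgf M X s" for s x a
    using that by (simp add: powr_mult exp_powr_real mult_ac)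
  have expsplit: "exp (- (a * s1 + b * s2) * x) = exp (- (a * s1) * x) * exp (- (b * s2) * x)"
    for a b s1 s2 x :: real by (simp add: exp_add[symmetric] algebra_simps)
  show ?thesis
  proof (intro conjI allI impI)
    fix s1 s2 a b assume h: "s1 \<in> {-s0<..<0} \<and> s2 \<in> {0<..<s0} \<and> (a, b) \<in> CIGF_domain M X \<and> a > 0 \<and> b > 0"
    have m1: "0 < mgf M X s1" using mgfF h by auto
    have m2: "0 < mgf M X s2" using mgfS h by auto
    have pt: "F x powr a * S x powr b \<le> exp (- (a * s1 + b * s2) * x) * (mgf M X s1 powr a * mgf M X s2 powr b)"
      if "x \<in> {0<..<r}" for x
    proof -
      have S0: "0 \<le> S x" using Spos that by (simp add: less_imp_le)
      have "F x powr a \<le> (mgf M X s1 * exp (- s1 * x)) powr a"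
        using cherF[of s1 x] h F01[of x] by (intro powr_mono2) auto
      also have "\<dots> = mgf M X s1 powr a * exp (- (a * s1) * x)" by (rule pw[OF m1])
      finally have 1: "F x powr a \<le> mgf M X s1 powr a * exp (- (a * s1) * x)" .
      have "S x powr b \<le> (mgf M X s2 * exp (- s2 * x)) powr b"
        using cherS[of s2 x] h S0 by (intro powr_mono2) auto
      also have "\<dots> = mgf M X s2 powr b * exp (- (b * s2) * x)" by (rule pw[OF m2])
      finally have 2: "S x powr b \<le> mgf M X s2 powr b * exp (- (b * s2) * x)" .
      have "F x powr a * S x powr b \<le> (mgf M X s1 powr a * exp (- (a * s1) * x)) * (mgf M X s2 powr b * exp (- (b * s2) * x))"
        using 1 2 by (intro mult_mono) auto
      then show ?thesis unfolding expsplit by (simp add: mult_ac)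
    qed
    have "CIGF M X a b \<le> (LINT x:{0<..<r}|lborel. exp (- (a * s1 + b * s2) * x) * (mgf M X s1 powr a * mgf M X s2 powr b))"
      unfolding CIGF_eq using dom h bint pt by (intro set_integral_mono) auto
    then show "CIGF M X a b \<le> g_bound r a b s1 s2 * mgf M X s1 powr a * mgf M X s2 powr b"
      unfolding key .
  next
    fix s1 s2 a b assume h: "s1 \<in> {-s0<..<0} \<and> s2 \<in> {0<..<s0} \<and> (a, b) \<in> CIGF_domain M X \<and> a < 0 \<and> b < 0"
    have m1: "0 < mgf M X s1" using mgfF h by auto
    have m2: "0 < mgf M X s2" using mgfS h by auto
    have pt: "exp (- (a * s1 + b * s2) * x) * (mgf M X s1 powr a * mgf M X s2 powr b) \<le> F x powr a * S x powr b"
      if "x \<in> {0<..<r}" for x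
    proof -
      have F0: "0 < F x" using Fpos that by simp
      have S0: "0 < S x" using Spos that by simp
      have "(mgf M X s1 * exp (- s1 * x)) powr a \<le> F x powr a"
        using cherF[of s1 x] h F0 by (intro powr_mono2') auto
      moreover have "(mgf M X s1 * exp (- s1 * x)) powr a = mgf M X s1 powr a * exp (- (a * s1) * x)" by (rule pw[OF m1])
      ultimately have 1: "mgf M X s1 powr a * exp (- (a * s1) * x) \<le> F x powr a" by simp
      have "(mgf M X s2 * exp (- s2 * x)) powr b \<le> S x powr b"
        using cherS[of s2 x] h S0 by (intro powr_mono2') auto
      moreover have "(mgf M X s2 * exp (- s2 * x)) powr b = mgf M X s2 powr b * exp (- (b * s2) * x)" by (rule pw[OF m2])
      ultimately have 2: "mgf M X s2 powr b * exp (- (b * s2) * x) \<le> S x powr b" by simp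
      have "(mgf M X s1 powr a * exp (- (a * s1) * x)) * (mgf M X s2 powr b * exp (- (b * s2) * x)) \<le> F x powr a * S x powr b"
        using 1 2 by (intro mult_mono) auto
      then show ?thesis unfolding expsplit by (simp add: mult_ac)
    qed
    have "(LINT x:{0<..<r}|lborel. exp (- (a * s1 + b * s2) * x) * (mgf M X s1 powr a * mgf M X s2 powr b)) \<le> CIGF M X a b"
      unfolding CIGF_eq using dom h bint pt by (intro set_integral_mono) auto
    then show "CIGF M X a b \<ge> g_bound r a b s1 s2 * mgf M X s1 powr a * mgf M X s2 powr b"
      unfolding key .
  qed
qed

end
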